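(* For all integers $L\ge 0$ and $n\ge 1$, $$S_L(n+1,n)=\frac{n(n+1)}{2}\left[\frac{(n+1)!}{2}\right]^{L}=\left[\frac{(n+1)!}{2}\right]^{L}S_0(n+1,n).$$
   Context: For an integer $L\ge 0$ let ${}_0F_L(z)=\sum_{n=0}^{\infty}\frac{z^n}{(n!)^{L+1}}$. Define the numbers $S_L(n,l)$ ($n,l\ge 0$) by the formal power series identities $\frac{({}_0F_L(z)-1)^l}{l!}=\sum_{n\ge l}\frac{S_L(n,l)}{(n!)^{L+1}}z^n$ for each $l\ge 0$. In particular $S_0(n,l)$ are the Stirling numbers of the second kind. *)

theory Defs
  imports "HOL-Computational_Algebra.Formal_Power_Series"
begin

definition hyp0F :: "nat \<Rightarrow> real fps" where
  "hyp0F L = Abs_fps (\<lambda>n. 1 / (fact n) ^ (L + 1))"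

definition S_L :: "nat \<Rightarrow> nat \<Rightarrow> nat \<Rightarrow> real" where
  "S_L L n l = (fact n) ^ (L + 1) *
     fps_nth (fps_const (1 / fact l) * (hyp0F L - 1) ^ l) n"

end

theory Submission
  imports Defs
begin

unbundle fps_syntax

definition hH :: "nat \<Rightarrow> real fps" where
  "hH L = Abs_fps (\<lambda>k. 1 / (fact (k+1)) ^ (L + 1))"

lemma hyp_eq: "hyp0F L - 1 = fps_X * hH L"
proof (rule fps_ext)
  fix k show "(hyp0F L - 1) $ k = (fps_X * hH L) $ k"
  proof (cases k)
    case 0 then show ?thesis by (simp add: hyp0F_def)
  next
    case (Suc m) then show ?thesis by (simp add: hyp0F_def hH_def del: fact_Suc)
  qed
qed

lemma hH0: "hH L $ 0 = 1" by (simp add: hH_def)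
lemma hH1: "hH L $ 1 = 1 / 2^(L+1)" by (simp add: hH_def)

lemma pow1: "((H::real fps) ^ n) $ 1 = of_nat n * H $ 1 * (H $ 0)^(n-1)"
proof (induction n)
  case 0 then show ?case by simp
next
  case (Suc n)
  have "(H ^ Suc n) $ 1 = (H * H^n) $ 1" by simp
  also have "\<dots> = H $ 0 * (H^n) $ 1 + H $ 1 * (H^n) $ 0"
    by (simp add: fps_mult_nth numeral_2_eq_2)
  finally show ?case using Suc by (cases n) (auto simp: fps_nth_power_0 algebra_simps)
qed

lemma key: "((hyp0F L - 1) ^ n) $ (n+1) = real n / 2^(L+1)"
proof -
  have "((hyp0F L - 1) ^ n) $ (n+1) = (fps_X ^ n * hH L ^ n) $ (n + 1)"
    by (simp add: hyp_eq power_mult_distrib)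
  also have "\<dots> = (hH L ^ n) $ 1"
    by (metis add.commute fps_X_power_mult_nth add_diff_cancel_left' le_add2 not_less)
  also have "\<dots> = real n / 2^(L+1)"
    unfolding pow1 hH0 hH1 by simp
  finally show ?thesis .
qed

lemma SL_val: "S_L L (n + 1) n = real (n * (n + 1)) / 2 * (fact (n + 1) / 2) ^ L"
proof -
  have f: "(fact (n+1)::real) = (n+1) * fact n" by (simp add: algebra_simps)
  have "S_L L (n + 1) n = fact (n+1) ^ (L+1) * (1 / fact n * (real n / 2^(L+1)))"
    unfolding S_L_def using key[of L n] by (simp del: fact_Suc)
  also have "\<dots> = real (n * (n + 1)) / 2 * (fact (n + 1) / 2) ^ L"
    unfolding f by (simp add: field_simps power_mult_distrib)
  finally show ?thesis .
qed

theorem mainTheorem4: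
  fixes L n :: nat
  assumes "n \<ge> 1"
  shows "S_L L (n + 1) n = real (n * (n + 1)) / 2 * (fact (n + 1) / 2) ^ L
       \<and> S_L L (n + 1) n = (fact (n + 1) / 2) ^ L * S_L 0 (n + 1) n"
  unfolding SL_val[of L n] SL_val[of 0 n] by simp

end
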